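(* Let $\Lambda^*$ be the group of invertible elements of $\Lambda$. The set $U=\{[v_1,\dots,v_{m+2n}]\in\mathbf{E}: (v_i,v_i)\in\Lambda^*\text{ for }1\le i\le m,\ (v_{m+2j-1},v_{m+2j})\in\Lambda^*\text{ for }1\le j\le n\}$ is dense in $\mathbf{E}$: every polynomial function on $\mathbf{E}$ vanishing on $U$ is identically zero.
   Context: $\Lambda=\varinjlim\wedge(\mathbb{C}^N)$ is the infinite Grassmann algebra ($\mathbb{Z}_2$-graded, supercommutative). $V_{\mathbb{C}}$ is a complex superspace of superdimension $(m|2n)$ with nondegenerate even supersymmetric form and standard homogeneous basis $e_1,\dots,e_{m+2n}$ ($e_1,\dots,e_m$ even); $V=V_{\mathbb{C}}\otimes\Lambda$ with the $\Lambda$-bilinearly extended form. $\mathbf{E}=\mathrm{End}_\Lambda(V)_{\bar0}$; an element $A\in\mathbf{E}$ is written $A=[v_1,\dots,v_{m+2n}]$ where $v_j=Ae_j$ (so $v_j\in V_{\bar0}$ for $j\le m$ and $v_j\in V_{\bar1}$ for $j>m$). A polynomial function on $\mathbf{E}$ is a finite $\Lambda$-linear combination of monomials in the matrix coefficients $a_{ij}\in\Lambda$ of $A$ (defined by $Ae_j=\sum_ie_ia_{ij}$). *)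

theory Defs
  imports Complex_Main
begin

text \<open>Infinite Grassmann algebra Lambda over the complex numbers, generators xi_0, xi_1, ...
  An element is a coefficient function on finite sets S of generator indices
  (S stands for the monomial xi_{s1} ... xi_{sk}, s1 < ... < sk), with finite support.\<close>

type_synonym grass = "nat set \<Rightarrow> complex"

definition is_grass :: "grass \<Rightarrow> bool" where
  "is_grass x \<longleftrightarrow> finite {S. x S \<noteq> 0} \<and> (\<forall>S. x S \<noteq> 0 \<longrightarrow> finite S)"

definition gzero :: grass where "gzero = (\<lambda>S. 0)"
definition gone :: grass where "gone = (\<lambda>S. if S = {} then 1 else 0)"
definition gadd :: "grass \<Rightarrow> grass \<Rightarrow> grass" where "gadd x y = (\<lambda>S. x S + y S)"
definition gsub :: "grass \<Rightarrow> grass \<Rightarrow> grass" where "gsub x y = (\<lambda>S. x S - y S)"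

text \<open>Sign of reordering the product of the ordered monomials T and U.\<close>
definition gsign :: "nat set \<Rightarrow> nat set \<Rightarrow> complex" where
  "gsign T U = (-1) ^ card {(t, u). t \<in> T \<and> u \<in> U \<and> u < t}"

definition gmul :: "grass \<Rightarrow> grass \<Rightarrow> grass" where
  "gmul x y = (\<lambda>S. if finite S then
       (\<Sum>T\<in>Pow S. gsign T (S - T) * x T * y (S - T)) else 0)"

definition gsum :: "grass list \<Rightarrow> grass" where
  "gsum xs = foldr gadd xs gzero"

definition gprod :: "grass list \<Rightarrow> grass" where
  "gprod xs = foldr gmul xs gone"

definition gunit :: "grass \<Rightarrow> bool" where
  "gunit x \<longleftrightarrow> is_grass x \<and> (\<exists>y. is_grass y \<and> gmul x y = gone \<and> gmul y x = gone)"

definition grass_even :: "grass \<Rightarrow> bool" where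
  "grass_even x \<longleftrightarrow> (\<forall>S. x S \<noteq> 0 \<longrightarrow> even (card S))"
definition grass_odd :: "grass \<Rightarrow> bool" where
  "grass_odd x \<longleftrightarrow> (\<forall>S. x S \<noteq> 0 \<longrightarrow> odd (card S))"

text \<open>Parity of the basis vector e_i (indices 1..m+2n; e_1..e_m even).\<close>
definition bodd :: "nat \<Rightarrow> nat \<Rightarrow> bool" where "bodd m i \<longleftrightarrow> m < i"

text \<open>Matrices A with coefficients a_ij (A e_j = sum_i e_i a_ij), indices 1..m+2n, zero outside.\<close>
type_synonym smat = "nat \<Rightarrow> nat \<Rightarrow> grass"

text \<open>E = End_Lambda(V)_0: the even Lambda-linear endomorphisms, i.e. a_ij has parity p(i)+p(j).\<close>
definition Emat :: "nat \<Rightarrow> nat \<Rightarrow> smat set" where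
  "Emat m n = {A. (\<forall>i j. is_grass (A i j)) \<and>
     (\<forall>i j. \<not> (1 \<le> i \<and> i \<le> m + 2*n \<and> 1 \<le> j \<and> j \<le> m + 2*n) \<longrightarrow> A i j = gzero) \<and>
     (\<forall>i j. (bodd m i \<longleftrightarrow> bodd m j) \<longrightarrow> grass_even (A i j)) \<and>
     (\<forall>i j. (bodd m i \<longleftrightarrow> \<not> bodd m j) \<longrightarrow> grass_odd (A i j))}"

text \<open>The Lambda-bilinear extension of the standard even supersymmetric form on V_C,
  (e_i,e_j) = delta_ij for i,j \<le> m, (e_{m+2k-1}, e_{m+2k}) = 1 = -(e_{m+2k}, e_{m+2k-1}),
  evaluated on v = sum_i e_i v_i, w = sum_i e_i w_i (coefficient functions).\<close>
definition sform :: "nat \<Rightarrow> nat \<Rightarrow> (nat \<Rightarrow> grass) \<Rightarrow> (nat \<Rightarrow> grass) \<Rightarrow> grass" where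
  "sform m n v w = gadd (gsum (map (\<lambda>i. gmul (v i) (w i)) [1..<m+1]))
      (gsum (map (\<lambda>k. gsub (gmul (v (m+2*k-1)) (w (m+2*k))) (gmul (v (m+2*k)) (w (m+2*k-1))))
                 [1..<n+1]))"

definition col :: "smat \<Rightarrow> nat \<Rightarrow> nat \<Rightarrow> grass" where "col A j = (\<lambda>i. A i j)"

definition Uset :: "nat \<Rightarrow> nat \<Rightarrow> smat set" where
  "Uset m n = {A \<in> Emat m n.
     (\<forall>i. 1 \<le> i \<and> i \<le> m \<longrightarrow> gunit (sform m n (col A i) (col A i))) \<and>
     (\<forall>k. 1 \<le> k \<and> k \<le> n \<longrightarrow> gunit (sform m n (col A (m+2*k-1)) (col A (m+2*k))))}"

text \<open>Polynomial functions on E: finite Lambda-linear combinations of monomials in the a_ij.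
  A polynomial is a list of terms (c, [(i1,j1),...,(ir,jr)]) denoting c * a_{i1j1} * ... * a_{irjr}.\<close>
type_synonym spoly = "(grass \<times> (nat \<times> nat) list) list"

definition is_spoly :: "spoly \<Rightarrow> bool" where
  "is_spoly p \<longleftrightarrow> (\<forall>t \<in> set p. is_grass (fst t))"

definition speval :: "spoly \<Rightarrow> smat \<Rightarrow> grass" where
  "speval p A = gsum (map (\<lambda>(c, ms). gmul c (gprod (map (\<lambda>(i, j). A i j) ms))) p)"

end

theory Submission
  imports Defs "HOL-Computational_Algebra.Polynomial"
begin

lemma is_grass_gzero[simp]: "is_grass gzero" by (simp add: is_grass_def gzero_def)
lemma is_grass_gone[simp]: "is_grass gone" by (simp add: is_grass_def gone_def)

lemma nz_add: "a + b \<noteq> (0::complex) \<Longrightarrow> a \<noteq> 0 \<or> b \<noteq> 0" by auto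

lemma is_grass_gadd[simp]: "is_grass x \<Longrightarrow> is_grass y \<Longrightarrow> is_grass (gadd x y)"
  unfolding is_grass_def gadd_def
  by (auto dest: nz_add intro: finite_subset[of _ "{S. x S \<noteq> 0} \<union> {S. y S \<noteq> 0}"])

lemma is_grass_gsub[simp]: assumes "is_grass x" "is_grass y" shows "is_grass (gsub x y)"
proof -
  have "{S. gsub x y S \<noteq> 0} \<subseteq> {S. x S \<noteq> 0} \<union> {S. y S \<noteq> 0}" by (auto simp: gsub_def)
  moreover have "gsub x y S \<noteq> 0 \<Longrightarrow> finite S" for S using assms by (cases "x S = 0") (auto simp: gsub_def is_grass_def)
  ultimately show ?thesis using assms unfolding is_grass_def by (meson finite_UnI finite_subset)
qed

lemma gmul_nz: assumes "gmul x y S \<noteq> 0"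
  shows "finite S \<and> (\<exists>T. T \<subseteq> S \<and> x T \<noteq> 0 \<and> y (S - T) \<noteq> 0)"
proof -
  have f: "finite S"
  proof (rule ccontr)
    assume "infinite S" then have "gmul x y S = 0" unfolding gmul_def by simp
    with assms show False by simp
  qed
  then have "(\<Sum>T\<in>Pow S. gsign T (S - T) * x T * y (S - T)) \<noteq> 0" using assms unfolding gmul_def by simp
  then obtain T where T: "T \<in> Pow S" "gsign T (S - T) * x T * y (S - T) \<noteq> 0"
    by (meson sum.not_neutral_contains_not_neutral)
  from T(2) have "x T \<noteq> 0" "y (S - T) \<noteq> 0" by auto
  with T(1) f show ?thesis by blast
qed

lemma is_grass_gmul[simp]: assumes "is_grass x" "is_grass y" shows "is_grass (gmul x y)"
proof -
  let ?X = "{S. x S \<noteq> 0}" and ?Y = "{S. y S \<noteq> 0}"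
  have sub: "{S. gmul x y S \<noteq> 0} \<subseteq> (\<lambda>p. fst p \<union> snd p) ` (?X \<times> ?Y)"
  proof
    fix S assume "S \<in> {S. gmul x y S \<noteq> 0}"
    then have "gmul x y S \<noteq> 0" by simp
    then obtain T where T: "T \<subseteq> S" "x T \<noteq> 0" "y (S - T) \<noteq> 0" using gmul_nz by metis
    then have "(T, S - T) \<in> ?X \<times> ?Y" by simp
    moreover have "S = fst (T, S - T) \<union> snd (T, S - T)" using T(1) by auto
    ultimately show "S \<in> (\<lambda>p. fst p \<union> snd p) ` (?X \<times> ?Y)" by (rule rev_image_eqI)
  qed
  have "finite ?X" "finite ?Y" using assms unfolding is_grass_def by blast+
  then have "finite ((\<lambda>p. fst p \<union> snd p) ` (?X \<times> ?Y))" by (intro finite_imageI finite_cartesian_product)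
  then have "finite {S. gmul x y S \<noteq> 0}" using sub by (rule finite_subset[rotated])
  moreover have "\<forall>S. gmul x y S \<noteq> 0 \<longrightarrow> finite S" using gmul_nz by metis
  ultimately show ?thesis unfolding is_grass_def by blast
qed

lemma is_grass_gsum: "(\<forall>x\<in>set xs. is_grass x) \<Longrightarrow> is_grass (gsum xs)"
proof (induction xs)
  case Nil show ?case by (simp add: gsum_def)
next
  case (Cons a xs) then show ?case unfolding gsum_def by simp
qed

lemma is_grass_gprod: "(\<forall>x\<in>set xs. is_grass x) \<Longrightarrow> is_grass (gprod xs)"
proof (induction xs)
  case Nil show ?case by (simp add: gprod_def)
next
  case (Cons a xs) then show ?case unfolding gprod_def by simp
qed

lemma even_gzero[simp]: "grass_even gzero" and odd_gzero[simp]: "grass_odd gzero"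
  by (auto simp: grass_even_def grass_odd_def gzero_def)

lemma even_gadd: "grass_even x \<Longrightarrow> grass_even y \<Longrightarrow> grass_even (gadd x y)"
  by (auto simp: grass_even_def gadd_def dest: nz_add)
lemma even_gsub: "grass_even x \<Longrightarrow> grass_even y \<Longrightarrow> grass_even (gsub x y)"
  unfolding grass_even_def gsub_def by (metis diff_self diff_zero)

lemma card_split: "finite S \<Longrightarrow> T \<subseteq> S \<Longrightarrow> card S = card T + card (S - T)"
  by (metis card_Diff_subset card_mono diff_add_inverse finite_subset le_add_diff_inverse)

lemma even_gmul_ee: "grass_even x \<Longrightarrow> grass_even y \<Longrightarrow> grass_even (gmul x y)"
  unfolding grass_even_def
  by (metis card_split even_add gmul_nz)
lemma even_gmul_oo: "grass_odd x \<Longrightarrow> grass_odd y \<Longrightarrow> grass_even (gmul x y)"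
  unfolding grass_even_def grass_odd_def
  by (metis card_split odd_add gmul_nz)

lemma even_gsum: "(\<forall>x\<in>set xs. grass_even x) \<Longrightarrow> grass_even (gsum xs)"
  by (induction xs) (auto simp: gsum_def even_gadd)

lemma odd_body: "grass_odd x \<Longrightarrow> x {} = 0"
  by (auto simp: grass_odd_def)

lemma gmul_body[simp]: "gmul x y {} = x {} * y {}"
  by (simp add: gmul_def gsign_def)

lemma gsum_body: "gsum xs {} = sum_list (map (\<lambda>x. x {}) xs)"
  by (induction xs) (auto simp: gsum_def gadd_def gzero_def)

lemma card_pairs:
  fixes T U :: "nat set"
  assumes "finite T" "finite U" "T \<inter> U = {}"
  shows "card {(t, u). t \<in> T \<and> u \<in> U \<and> u < t} + card {(u, t). u \<in> U \<and> t \<in> T \<and> t < u} = card T * card U"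
proof -
  let ?A = "{(t, u). t \<in> T \<and> u \<in> U \<and> u < t}" and ?B = "{(t, u). t \<in> T \<and> u \<in> U \<and> t < u}"
  have sw: "{(u, t). u \<in> U \<and> t \<in> T \<and> t < u} = prod.swap ` ?B"
    by force
  have "card (prod.swap ` ?B) = card ?B"
    by (rule card_image) (simp add: inj_on_def)
  have fA: "finite ?A" by (rule finite_subset[of _ "T \<times> U"]) (use assms in force)+
  have fB: "finite ?B" by (rule finite_subset[of _ "T \<times> U"]) (use assms in force)+
  have d: "?A \<inter> ?B = {}" by force
  have u: "?A \<union> ?B = T \<times> U" using assms(3) by (force simp: linorder_neq_iff)
  have "card ?A + card ?B = card (T \<times> U)" using card_Un_disjoint[OF fA fB d] u by simp
  then show ?thesis using sw \<open>card (prod.swap ` ?B) = card ?B\<close> by (simp add: card_cartesian_product)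
qed

lemma m1pow: "even (a + b) \<Longrightarrow> (-1::complex) ^ a = (-1) ^ b"
  by (cases "even a") (auto simp: minus_one_power_iff)

lemma gsign_swap:
  assumes "finite T" "finite U" "T \<inter> U = {}" "even (card T)"
  shows "gsign T U = gsign U T"
proof -
  have "even (card {(t, u). t \<in> T \<and> u \<in> U \<and> u < t} + card {(u, t). u \<in> U \<and> t \<in> T \<and> t < u})"
    using card_pairs[OF assms(1-3)] assms(4) by (metis even_mult_iff)
  then show ?thesis unfolding gsign_def by (rule m1pow)
qed

lemma gmul_comm_even: assumes "grass_even x" shows "gmul x y = gmul y x"
proof
  fix S show "gmul x y S = gmul y x S"
  proof (cases "finite S")
    case False then show ?thesis by (simp add: gmul_def)
  next
    case True
    have "(\<Sum>T\<in>Pow S. gsign T (S - T) * y T * x (S - T)) = (\<Sum>T\<in>Pow S. gsign (S - T) (S - (S - T)) * y (S - T) * x (S - (S - T)))"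
      by (rule sum.reindex_bij_witness[of _ "\<lambda>T. S - T" "\<lambda>T. S - T"]) (auto simp: Diff_Diff_Int Int_absorb1 Int_absorb2)
    also have "\<dots> = (\<Sum>T\<in>Pow S. gsign T (S - T) * x T * y (S - T))"
    proof (rule sum.cong[OF refl])
      fix T assume T: "T \<in> Pow S"
      then have e: "S - (S - T) = T" by auto
      show "gsign (S - T) (S - (S - T)) * y (S - T) * x (S - (S - T)) = gsign T (S - T) * x T * y (S - T)"
      proof (cases "x T = 0")
        case False
        then have "even (card T)" using assms by (auto simp: grass_even_def)
        then have "gsign T (S - T) = gsign (S - T) T"
          using T True by (intro gsign_swap) (auto intro: finite_subset)
        then show ?thesis by (simp add: e)
      qed (simp add: e)
    qed
    finally show ?thesis using True by (simp add: gmul_def)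
  qed
qed

function ginv :: "grass \<Rightarrow> nat set \<Rightarrow> complex" where
  "ginv x S = (if finite S then (if S = {} then 1 / x {} else
     - (1 / x {}) * (\<Sum>T\<in>Pow S - {{}}. gsign T (S - T) * x T * ginv x (S - T))) else 0)"
  by auto
termination
  by (relation "measure (\<lambda>(x,S). card S)") (auto intro!: psubset_card_mono)

declare ginv.simps[simp del]

lemma gsign_empty[simp]: "gsign {} S = 1"
  by (simp add: gsign_def)

lemma ginv_right: assumes "x {} \<noteq> 0" shows "gmul x (ginv x) = gone"
proof
  fix S show "gmul x (ginv x) S = gone S"
  proof (cases "finite S")
    case False then show ?thesis by (auto simp: gmul_def gone_def)
  next
    case True
    show ?thesis
    proof (cases "S = {}")
      case True then show ?thesis using assms by (simp add: gone_def ginv.simps)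
    next
      case ne: False
      have P: "Pow S = insert {} (Pow S - {{}})" by auto
      have g: "ginv x S = - (1 / x {}) * (\<Sum>T\<in>Pow S - {{}}. gsign T (S - T) * x T * ginv x (S - T))"
        using True ne by (subst ginv.simps) simp
      have "gmul x (ginv x) S = x {} * ginv x S + (\<Sum>T\<in>Pow S - {{}}. gsign T (S - T) * x T * ginv x (S - T))"
        unfolding gmul_def using True by (subst P) (simp add: sum.insert_remove)
      also have "\<dots> = 0"
        using assms by (simp add: g field_simps)
      finally show ?thesis using ne by (simp add: gone_def)
    qed
  qed
qed

lemma ginv_inf: "infinite S \<Longrightarrow> ginv x S = 0"
  by (subst ginv.simps) simp

lemma ginv_rec: "finite S \<Longrightarrow> S \<noteq> {} \<Longrightarrow>
   ginv x S = - (1 / x {}) * (\<Sum>T\<in>Pow S - {{}}. gsign T (S - T) * x T * ginv x (S - T))"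
  by (subst ginv.simps) simp

lemma ginv_supp: "ginv x S \<noteq> 0 \<Longrightarrow> S \<subseteq> \<Union>{T. x T \<noteq> 0}"
proof (induction x S rule: ginv.induct)
  case (1 x S)
  show ?case
  proof (cases "finite S \<and> S \<noteq> {}")
    case True
    then have "- (1 / x {}) * (\<Sum>T\<in>Pow S - {{}}. gsign T (S - T) * x T * ginv x (S - T)) \<noteq> 0"
      using "1.prems" ginv_rec[of S x] by simp
    then have "(\<Sum>T\<in>Pow S - {{}}. gsign T (S - T) * x T * ginv x (S - T)) \<noteq> 0"
      by (metis mult_zero_right)
    then obtain T where T: "T \<in> Pow S - {{}}" "gsign T (S - T) * x T * ginv x (S - T) \<noteq> 0"
      by (meson sum.not_neutral_contains_not_neutral)
    from T(2) have nz: "x T \<noteq> 0" "ginv x (S - T) \<noteq> 0" by auto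
    have "S - T \<subseteq> \<Union>{T. x T \<noteq> 0}"
      using "1.IH" True T(1) nz(2) by metis
    moreover have "T \<subseteq> \<Union>{T. x T \<noteq> 0}" using nz(1) by (intro Union_upper) simp
    ultimately show ?thesis by blast
  next
    case False
    show ?thesis
    proof (cases "finite S")
      case True then have "S = {}" using False by simp
      then show ?thesis by simp
    next
      case False then show ?thesis using "1.prems" ginv_inf by metis
    qed
  qed
qed

lemma is_grass_ginv: assumes "is_grass x" shows "is_grass (ginv x)"
proof -
  have "finite {T. x T \<noteq> 0}" "\<forall>T\<in>{T. x T \<noteq> 0}. finite T" using assms unfolding is_grass_def by auto
  then have "finite (\<Union>{T. x T \<noteq> 0})" by (metis finite_Union)
  then have "finite (Pow (\<Union>{T. x T \<noteq> 0}))" by simp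
  then have "finite {S. ginv x S \<noteq> 0}"
    by (rule finite_subset[rotated]) (use ginv_supp in blast)
  moreover have "\<forall>S. ginv x S \<noteq> 0 \<longrightarrow> finite S" using ginv_inf by metis
  ultimately show ?thesis unfolding is_grass_def by blast
qed

lemma gunit_body: assumes "is_grass x" "grass_even x" "x {} \<noteq> 0" shows "gunit x"
  unfolding gunit_def using assms ginv_right[of x, OF assms(3)] is_grass_ginv[of x, OF assms(1)]
    gmul_comm_even[of x "ginv x", OF assms(2)] by metis



definition ispol :: "(complex \<Rightarrow> complex) \<Rightarrow> bool" where
  "ispol f \<longleftrightarrow> (\<exists>q. \<forall>t. f t = poly q t)"

lemma ispol_const[simp]: "ispol (\<lambda>t. c)"
  unfolding ispol_def by (rule exI[of _ "[:c:]"]) simp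
lemma ispol_id[simp]: "ispol (\<lambda>t. t)"
  unfolding ispol_def by (rule exI[of _ "[:0,1:]"]) simp
lemma ispol_add[simp]: "ispol f \<Longrightarrow> ispol g \<Longrightarrow> ispol (\<lambda>t. f t + g t)"
  unfolding ispol_def by (metis poly_add)
lemma ispol_diff[simp]: "ispol f \<Longrightarrow> ispol g \<Longrightarrow> ispol (\<lambda>t. f t - g t)"
  unfolding ispol_def by (metis poly_diff)
lemma ispol_mult[simp]: "ispol f \<Longrightarrow> ispol g \<Longrightarrow> ispol (\<lambda>t. f t * g t)"
  unfolding ispol_def by (metis poly_mult)
lemma ispol_if[simp]: "ispol f \<Longrightarrow> ispol g \<Longrightarrow> ispol (\<lambda>t. if b then f t else g t)"
  by (cases b) simp_all
lemma ispol_sum: assumes "\<forall>x\<in>A. ispol (f x)" shows "ispol (\<lambda>t. \<Sum>x\<in>A. f x t)"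
proof -
  from assms obtain q where q: "\<forall>x\<in>A. \<forall>t. f x t = poly (q x) t"
    unfolding ispol_def by metis
  show ?thesis unfolding ispol_def
    by (rule exI[of _ "\<Sum>x\<in>A. q x"]) (simp add: poly_sum q)
qed

definition gpol :: "(complex \<Rightarrow> grass) \<Rightarrow> bool" where
  "gpol G \<longleftrightarrow> (\<forall>S. ispol (\<lambda>t. G t S))"

lemma gpol_const[simp]: "gpol (\<lambda>t. c)" by (simp add: gpol_def)

lemma gpol_gadd: "gpol G \<Longrightarrow> gpol H \<Longrightarrow> gpol (\<lambda>t. gadd (G t) (H t))"
  by (simp add: gpol_def gadd_def)

lemma gpol_gmul: assumes "gpol G" "gpol H" shows "gpol (\<lambda>t. gmul (G t) (H t))"
  unfolding gpol_def
proof
  fix S show "ispol (\<lambda>t. gmul (G t) (H t) S)"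
  proof (cases "finite S")
    case True
    have "\<forall>T\<in>Pow S. ispol (\<lambda>t. gsign T (S - T) * G t T * H t (S - T))"
      using assms unfolding gpol_def by simp
    then have "ispol (\<lambda>t. \<Sum>T\<in>Pow S. gsign T (S - T) * G t T * H t (S - T))" by (rule ispol_sum)
    then show ?thesis using True by (simp add: gmul_def)
  next
    case False then show ?thesis by (simp add: gmul_def)
  qed
qed

lemma gpol_gsum: "(\<forall>a\<in>set xs. gpol (\<lambda>t. f t a)) \<Longrightarrow> gpol (\<lambda>t. gsum (map (f t) xs))"
proof (induction xs)
  case Nil then show ?case by (simp add: gsum_def)
next
  case (Cons a xs)
  then show ?case using gpol_gadd[of "\<lambda>t. f t a" "\<lambda>t. gsum (map (f t) xs)"] by (simp add: gsum_def)
qed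

lemma gpol_gprod: "(\<forall>a\<in>set xs. gpol (\<lambda>t. f t a)) \<Longrightarrow> gpol (\<lambda>t. gprod (map (f t) xs))"
proof (induction xs)
  case Nil then show ?case by (simp add: gprod_def)
next
  case (Cons a xs)
  then show ?case using gpol_gmul[of "\<lambda>t. f t a" "\<lambda>t. gprod (map (f t) xs)"] by (simp add: gprod_def)
qed

definition At :: "nat \<Rightarrow> nat \<Rightarrow> smat \<Rightarrow> complex \<Rightarrow> smat" where
  "At m n A t = (\<lambda>i j S. A i j S + (if i = j \<and> 1 \<le> i \<and> i \<le> m + 2*n \<and> S = {} then t else 0))"

lemma gpol_speval: "gpol (\<lambda>t. speval p (At m n A t))"
proof -
  have "\<forall>a\<in>set p. gpol (\<lambda>t. (\<lambda>(c, ms). gmul c (gprod (map (\<lambda>(i, j). At m n A t i j) ms))) a)"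
  proof
    fix a assume "a \<in> set p"
    obtain c ms where a: "a = (c, ms)" by (cases a)
    have "gpol (\<lambda>t. gprod (map (\<lambda>(i, j). At m n A t i j) ms))"
      by (rule gpol_gprod) (auto simp: gpol_def At_def)
    then have "gpol (\<lambda>t. gmul c (gprod (map (\<lambda>(i, j). At m n A t i j) ms)))"
      using gpol_gmul[of "\<lambda>t. c"] by simp
    then show "gpol (\<lambda>t. (\<lambda>(c, ms). gmul c (gprod (map (\<lambda>(i, j). At m n A t i j) ms))) a)"
      by (simp add: a)
  qed
  then show ?thesis unfolding speval_def
    by (rule gpol_gsum[where f="\<lambda>t. (\<lambda>(c, ms). gmul c (gprod (map (\<lambda>(i, j). At m n A t i j) ms)))"])
qed

lemma At_0: "At m n A 0 = A" by (simp add: At_def)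

lemma EmatD: assumes "A \<in> Emat m n"
  shows "is_grass (A i j)" "\<not> (1 \<le> i \<and> i \<le> m + 2 * n \<and> 1 \<le> j \<and> j \<le> m + 2 * n) \<Longrightarrow> A i j = gzero"
    "bodd m i = bodd m j \<Longrightarrow> grass_even (A i j)" "bodd m i = (\<not> bodd m j) \<Longrightarrow> grass_odd (A i j)"
  using assms unfolding Emat_def mem_Collect_eq by blast+

lemma At_Emat: assumes A: "A \<in> Emat m n" shows "At m n A t \<in> Emat m n"
  unfolding Emat_def mem_Collect_eq
proof (intro conjI allI impI)
  fix i j
  have g: "is_grass (A i j)" using A by (rule EmatD)
  have "{S. At m n A t i j S \<noteq> 0} \<subseteq> insert {} {S. A i j S \<noteq> 0}"
  proof
    fix S assume "S \<in> {S. At m n A t i j S \<noteq> 0}"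
    then show "S \<in> insert {} {S. A i j S \<noteq> 0}" unfolding At_def by (cases "S = {}") simp_all
  qed
  moreover have "finite (insert {} {S. A i j S \<noteq> 0})" using g unfolding is_grass_def by simp
  ultimately have "finite {S. At m n A t i j S \<noteq> 0}" by (rule finite_subset)
  moreover have "\<forall>S. At m n A t i j S \<noteq> 0 \<longrightarrow> finite S"
  proof (intro allI impI)
    fix S assume "At m n A t i j S \<noteq> 0"
    then show "finite S" using g unfolding is_grass_def At_def by (cases "S = {}") simp_all
  qed
  ultimately show "is_grass (At m n A t i j)" unfolding is_grass_def by (intro conjI)
next
  fix i j assume h: "\<not> (1 \<le> i \<and> i \<le> m + 2 * n \<and> 1 \<le> j \<and> j \<le> m + 2 * n)"
  then have "A i j = gzero" using A by (intro EmatD)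
  then show "At m n A t i j = gzero" using h unfolding At_def gzero_def by auto
next
  fix i j assume h: "bodd m i = bodd m j"
  then have "grass_even (A i j)" using A by (intro EmatD)
  then show "grass_even (At m n A t i j)" unfolding grass_even_def At_def
  proof (intro allI impI)
    fix S assume "\<forall>S. A i j S \<noteq> 0 \<longrightarrow> even (card S)"
      "A i j S + (if i = j \<and> 1 \<le> i \<and> i \<le> m + 2 * n \<and> S = {} then t else 0) \<noteq> 0"
    then show "even (card S)" by (cases "S = {}") simp_all
  qed
next
  fix i j assume h: "bodd m i = (\<not> bodd m j)"
  then have "grass_odd (A i j)" using A by (intro EmatD)
  moreover have "i \<noteq> j" using h by auto
  ultimately show "grass_odd (At m n A t i j)" by (simp add: grass_odd_def At_def)
qed

lemma sl: "sum_list (map f [1..<Suc k]) = (\<Sum>i\<in>{1..k}. f i)"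
  by (induction k) (simp_all add: atLeastAtMostSuc_conv add.commute)

lemma sform_body: "sform m n v w {} = (\<Sum>i\<in>{1..m}. v i {} * w i {}) +
   (\<Sum>k\<in>{1..n}. v (m+2*k-1) {} * w (m+2*k) {} - v (m+2*k) {} * w (m+2*k-1) {})"
  by (simp only: sform_def gadd_def gsum_body map_map o_def gmul_body gsub_def Suc_eq_plus1[symmetric] sl)

lemma is_grass_sform: assumes "\<forall>r. is_grass (v r)" "\<forall>r. is_grass (w r)" shows "is_grass (sform m n v w)"
  unfolding sform_def using assms by (auto intro!: is_grass_gadd is_grass_gsum is_grass_gsub)

lemma even_sform: assumes "\<forall>r s. bodd m r = bodd m s \<longrightarrow> grass_even (gmul (v r) (w s))"
  shows "grass_even (sform m n v w)"
  unfolding sform_def using assms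
  by (auto intro!: even_gadd even_gsum even_gsub simp: bodd_def)


lemma quad_sum:
  fixes x y z :: "nat \<Rightarrow> complex"
  assumes "finite I" "i \<in> I"
  shows "(\<Sum>r\<in>I. (x r + (if r = i then t else 0)) * (y r + (if r = i then t else 0)) - z r)
         = t * t + (x i + y i) * t + (\<Sum>r\<in>I. x r * y r - z r)"
proof -
  have "(\<Sum>r\<in>I. (x r + (if r = i then t else 0)) * (y r + (if r = i then t else 0)) - z r)
      = (\<Sum>r\<in>I. (x r * y r - z r) + (if r = i then t * t + (x r + y r) * t else 0))"
    by (rule sum.cong) (simp_all add: algebra_simps)
  also have "\<dots> = (\<Sum>r\<in>I. x r * y r - z r) + (\<Sum>r\<in>I. (if r = i then t * t + (x r + y r) * t else 0))"
    by (rule sum.distrib)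
  also have "(\<Sum>r\<in>I. (if r = i then t * t + (x r + y r) * t else 0)) = t * t + (x i + y i) * t"
    using assms by (simp add: sum.delta)
  finally show ?thesis by simp
qed

lemma quad_finite:
  assumes "\<forall>t. f t = t * t + B * t + C"
  shows "finite {t::complex. f t = 0}"
proof -
  have ne: "[:C, B, 1:] \<noteq> 0" by simp
  have "{t. f t = 0} = {t. poly [:C, B, 1:] t = 0}"
    using assms by (simp add: algebra_simps)
  then show ?thesis using poly_roots_finite[OF ne] by simp
qed

lemma body_i:
  assumes A: "A \<in> Emat m n" and i: "1 \<le> i" "i \<le> m"
  shows "\<forall>t. sform m n (col (At m n A t) i) (col (At m n A t) i) {}
     = t * t + (A i i {} + A i i {}) * t + (\<Sum>r\<in>{1..m}. A r i {} * A r i {} - 0)"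
proof
  fix t
  have s2: "(\<Sum>k\<in>{1..n}. col (At m n A t) i (m+2*k-1) {} * col (At m n A t) i (m+2*k) {}
       - col (At m n A t) i (m+2*k) {} * col (At m n A t) i (m+2*k-1) {}) = 0"
    by (simp add: mult.commute)
  have s1: "(\<Sum>r\<in>{1..m}. col (At m n A t) i r {} * col (At m n A t) i r {})
     = (\<Sum>r\<in>{1..m}. (A r i {} + (if r = i then t else 0)) * (A r i {} + (if r = i then t else 0)) - 0)"
  proof (rule sum.cong[OF refl])
    fix r assume "r \<in> {1..m}"
    then have "(r = i \<and> 1 \<le> r \<and> r \<le> m + 2 * n \<and> {} = ({}::nat set)) = (r = i)" by auto
    then show "col (At m n A t) i r {} * col (At m n A t) i r {}
        = (A r i {} + (if r = i then t else 0)) * (A r i {} + (if r = i then t else 0)) - 0"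
      unfolding col_def At_def by simp
  qed
  show "sform m n (col (At m n A t) i) (col (At m n A t) i) {}
     = t * t + (A i i {} + A i i {}) * t + (\<Sum>r\<in>{1..m}. A r i {} * A r i {} - 0)"
    unfolding sform_body s2 s1 using i
    by (subst quad_sum[where x="\<lambda>r. A r i {}" and y="\<lambda>r. A r i {}" and z="\<lambda>r. 0"]) simp_all
qed

lemma body_k:
  assumes A: "A \<in> Emat m n" and k: "1 \<le> k" "k \<le> n"
  shows "\<forall>t. sform m n (col (At m n A t) (m+2*k-1)) (col (At m n A t) (m+2*k)) {}
     = t * t + (A (m+2*k-1) (m+2*k-1) {} + A (m+2*k) (m+2*k) {}) * t
       + (\<Sum>l\<in>{1..n}. A (m+2*l-1) (m+2*k-1) {} * A (m+2*l) (m+2*k) {}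
            - A (m+2*l) (m+2*k-1) {} * A (m+2*l-1) (m+2*k) {})"
proof
  fix t
  let ?a = "At m n A t"
  have s1: "(\<Sum>r\<in>{1..m}. col ?a (m+2*k-1) r {} * col ?a (m+2*k) r {}) = 0"
  proof (rule sum.neutral, rule ballI)
    fix r assume r: "r \<in> {1..m}"
    then have "bodd m r = (\<not> bodd m (m+2*k-1))" using k by (simp add: bodd_def)
    then have "grass_odd (A r (m+2*k-1))" using A by (intro EmatD)
    then have "A r (m+2*k-1) {} = 0" by (rule odd_body)
    moreover have "r \<le> m" using r by simp
    then have "r \<noteq> m+2*k-1" using k by arith
    ultimately show "col ?a (m+2*k-1) r {} * col ?a (m+2*k) r {} = 0"
      unfolding col_def At_def by simp
  qed
  have s2: "(\<Sum>l\<in>{1..n}. col ?a (m+2*k-1) (m+2*l-1) {} * col ?a (m+2*k) (m+2*l) {}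
       - col ?a (m+2*k-1) (m+2*l) {} * col ?a (m+2*k) (m+2*l-1) {})
    = (\<Sum>l\<in>{1..n}. (A (m+2*l-1) (m+2*k-1) {} + (if l = k then t else 0)) * (A (m+2*l) (m+2*k) {} + (if l = k then t else 0))
            - A (m+2*l) (m+2*k-1) {} * A (m+2*l-1) (m+2*k) {})"
  proof (rule sum.cong[OF refl])
    fix l assume l: "l \<in> {1..n}"
    have e1: "(m+2*l-1 = m+2*k-1 \<and> 1 \<le> m+2*l-1 \<and> m+2*l-1 \<le> m + 2 * n \<and> {} = ({}::nat set)) = (l = k)"
      using l k by auto
    have e2: "(m+2*l = m+2*k \<and> 1 \<le> m+2*l \<and> m+2*l \<le> m + 2 * n \<and> {} = ({}::nat set)) = (l = k)"
      using l k by auto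
    have e3: "m+2*l \<noteq> m+2*k-1" using l k by presburger
    have e4: "m+2*l-1 \<noteq> m+2*k" using l k by presburger
    show "col ?a (m+2*k-1) (m+2*l-1) {} * col ?a (m+2*k) (m+2*l) {}
       - col ?a (m+2*k-1) (m+2*l) {} * col ?a (m+2*k) (m+2*l-1) {}
      = (A (m+2*l-1) (m+2*k-1) {} + (if l = k then t else 0)) * (A (m+2*l) (m+2*k) {} + (if l = k then t else 0))
            - A (m+2*l) (m+2*k-1) {} * A (m+2*l-1) (m+2*k) {}"
      unfolding col_def At_def e1 e2 using e3 e4 by simp
  qed
  have q: "(\<Sum>l\<in>{1..n}. (A (m+2*l-1) (m+2*k-1) {} + (if l = k then t else 0)) * (A (m+2*l) (m+2*k) {} + (if l = k then t else 0))
            - A (m+2*l) (m+2*k-1) {} * A (m+2*l-1) (m+2*k) {})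
     = t * t + (A (m+2*k-1) (m+2*k-1) {} + A (m+2*k) (m+2*k) {}) * t
       + (\<Sum>l\<in>{1..n}. A (m+2*l-1) (m+2*k-1) {} * A (m+2*l) (m+2*k) {}
            - A (m+2*l) (m+2*k-1) {} * A (m+2*l-1) (m+2*k) {})"
    using k by (subst quad_sum[where x="\<lambda>l. A (m+2*l-1) (m+2*k-1) {}" and y="\<lambda>l. A (m+2*l) (m+2*k) {}"
        and z="\<lambda>l. A (m+2*l) (m+2*k-1) {} * A (m+2*l-1) (m+2*k) {}"]) simp_all
  show "sform m n (col ?a (m+2*k-1)) (col ?a (m+2*k)) {}
     = t * t + (A (m+2*k-1) (m+2*k-1) {} + A (m+2*k) (m+2*k) {}) * t
       + (\<Sum>l\<in>{1..n}. A (m+2*l-1) (m+2*k-1) {} * A (m+2*l) (m+2*k) {}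
            - A (m+2*l) (m+2*k-1) {} * A (m+2*l-1) (m+2*k) {})"
    unfolding sform_body s1 s2 q by simp
qed

lemma col_even:
  assumes a: "a \<in> Emat m n" and "bodd m i = bodd m j"
  shows "\<forall>r s. bodd m r = bodd m s \<longrightarrow> grass_even (gmul (col a i r) (col a j s))"
proof (intro allI impI)
  fix r s assume rs: "bodd m r = bodd m s"
  show "grass_even (gmul (col a i r) (col a j s))"
  proof (cases "bodd m r = bodd m i")
    case True
    then have "grass_even (a r i)" "grass_even (a s j)" using a rs assms(2) by (auto intro: EmatD)
    then show ?thesis unfolding col_def by (rule even_gmul_ee)
  next
    case False
    then have "grass_odd (a r i)" "grass_odd (a s j)" using a rs assms(2) by (auto intro: EmatD)
    then show ?thesis unfolding col_def by (rule even_gmul_oo)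
  qed
qed

lemma col_grass: "a \<in> Emat m n \<Longrightarrow> \<forall>r. is_grass (col a i r)"
  unfolding col_def by (auto intro: EmatD)

theorem lemma6p6:
  fixes m n :: nat and p :: spoly
  assumes "is_spoly p"
    and "\<forall>A \<in> Uset m n. speval p A = gzero"
  shows "\<forall>A \<in> Emat m n. speval p A = gzero"
proof
  fix A assume A: "A \<in> Emat m n"
  define fi where "fi = (\<lambda>i t. sform m n (col (At m n A t) i) (col (At m n A t) i) {})"
  define fk where "fk = (\<lambda>k t. sform m n (col (At m n A t) (m+2*k-1)) (col (At m n A t) (m+2*k)) {})"
  define bad where "bad = (\<Union>i\<in>{1..m}. {t. fi i t = 0}) \<union> (\<Union>k\<in>{1..n}. {t. fk k t = 0})"
  have fin: "finite bad"
  proof -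
    have "\<forall>i\<in>{1..m}. finite {t. fi i t = 0}"
    proof
      fix i assume "i \<in> {1..m}"
      then show "finite {t. fi i t = 0}" unfolding fi_def
        using body_i[OF A, of i] by (intro quad_finite) auto
    qed
    moreover have "\<forall>k\<in>{1..n}. finite {t. fk k t = 0}"
    proof
      fix k assume "k \<in> {1..n}"
      then show "finite {t. fk k t = 0}" unfolding fk_def
        using body_k[OF A, of k] by (intro quad_finite) auto
    qed
    ultimately show ?thesis unfolding bad_def by auto
  qed
  have good: "At m n A t \<in> Uset m n" if t: "t \<notin> bad" for t
  proof -
    have a: "At m n A t \<in> Emat m n" using A by (rule At_Emat)
    have u1: "gunit (sform m n (col (At m n A t) i) (col (At m n A t) i))" if i: "1 \<le> i" "i \<le> m" for i
    proof (rule gunit_body)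
      show "is_grass (sform m n (col (At m n A t) i) (col (At m n A t) i))"
        using col_grass[OF a] by (intro is_grass_sform) auto
      show "grass_even (sform m n (col (At m n A t) i) (col (At m n A t) i))"
        by (rule even_sform, rule col_even[OF a]) simp
      show "sform m n (col (At m n A t) i) (col (At m n A t) i) {} \<noteq> 0"
        using t i unfolding bad_def fi_def by auto
    qed
    have u2: "gunit (sform m n (col (At m n A t) (m+2*k-1)) (col (At m n A t) (m+2*k)))"
      if k: "1 \<le> k" "k \<le> n" for k
    proof (rule gunit_body)
      show "is_grass (sform m n (col (At m n A t) (m+2*k-1)) (col (At m n A t) (m+2*k)))"
        using col_grass[OF a] by (intro is_grass_sform) auto
      show "grass_even (sform m n (col (At m n A t) (m+2*k-1)) (col (At m n A t) (m+2*k)))"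
        by (rule even_sform, rule col_even[OF a]) (use k in \<open>simp add: bodd_def\<close>)
      show "sform m n (col (At m n A t) (m+2*k-1)) (col (At m n A t) (m+2*k)) {} \<noteq> 0"
        using t k unfolding bad_def fk_def by auto
    qed
    show ?thesis unfolding Uset_def using a u1 u2 by blast
  qed
  show "speval p A = gzero"
  proof
    fix S
    obtain q where q: "\<forall>t. speval p (At m n A t) S = poly q t"
      using gpol_speval[of p m n A] unfolding gpol_def ispol_def by blast
    have "q = 0"
    proof (rule ccontr)
      assume "q \<noteq> 0"
      then have "finite {t. poly q t = 0}" by (rule poly_roots_finite)
      moreover have "UNIV \<subseteq> bad \<union> {t. poly q t = 0}"
      proof
        fix t :: complex
        show "t \<in> bad \<union> {t. poly q t = 0}"
        proof (cases "t \<in> bad")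
          case False
          then have "speval p (At m n A t) = gzero" using good assms(2) by blast
          then have "poly q t = 0" using q by (metis gzero_def)
          then show ?thesis by simp
        qed simp
      qed
      ultimately have "finite (UNIV :: complex set)" using fin by (metis finite_UnI finite_subset)
      then show False using infinite_UNIV_char_0 by blast
    qed
    then have "speval p (At m n A 0) S = 0" using q by simp
    then show "speval p A S = gzero S" by (simp add: At_0 gzero_def)
  qed
qed

end
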